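(* Let $Q_n=[-\tfrac12,\tfrac12]^n$ and let $W_{Q_n}=\sup_{t\in Q_n}\langle U,t\rangle-\inf_{t\in Q_n}\langle U,t\rangle$, where $U$ is uniformly distributed on the unit sphere $\mathbb{S}^{n-1}\subset\mathbb{R}^n$. Then, as $n\to\infty$, $$W_{Q_n} - \sqrt{\frac{2n}{\pi}} \to \mathcal{N}\left(0, \frac{\pi-3}{\pi}\right)$$ in distribution.
   Context: $\mathcal{N}(0,s^2)$ denotes the centered normal distribution with variance $s^2$. *)

theory Defs
  imports "HOL-Probability.Probability"
begin

text \<open>Euclidean space R^n modelled as functions on the index set {..<n}
  (extensional), with product Lebesgue measure.\<close>

definition Rn :: "nat \<Rightarrow> (nat \<Rightarrow> real) measure" where
  "Rn n = PiM {..<n} (\<lambda>_. lborel)"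

definition euclid_norm :: "nat \<Rightarrow> (nat \<Rightarrow> real) \<Rightarrow> real" where
  "euclid_norm n x = sqrt (\<Sum>i<n. (x i)\<^sup>2)"

definition inner_n :: "nat \<Rightarrow> (nat \<Rightarrow> real) \<Rightarrow> (nat \<Rightarrow> real) \<Rightarrow> real" where
  "inner_n n x y = (\<Sum>i<n. x i * y i)"

definition unit_ball_n :: "nat \<Rightarrow> (nat \<Rightarrow> real) set" where
  "unit_ball_n n = {x \<in> space (Rn n). euclid_norm n x \<le> 1}"

text \<open>Uniform (normalized surface) measure on the unit sphere S^{n-1}, defined as the
  cone measure: sigma(A) = vol{r x. x \<in> A, 0 \<le> r \<le> 1} / vol(B^n), i.e. the image of the
  uniform distribution on the unit ball under radial projection x \<mapsto> x/|x|.\<close>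

definition uniform_sphere :: "nat \<Rightarrow> (nat \<Rightarrow> real) measure" where
  "uniform_sphere n =
     distr (uniform_measure (Rn n) (unit_ball_n n)) (Rn n)
           (\<lambda>x. \<lambda>i\<in>{..<n}. x i / euclid_norm n x)"

definition cube_n :: "nat \<Rightarrow> (nat \<Rightarrow> real) set" where
  "cube_n n = PiE {..<n} (\<lambda>_. {-1/2..1/2})"

definition width_cube :: "nat \<Rightarrow> (nat \<Rightarrow> real) \<Rightarrow> real" where
  "width_cube n u = (SUP t\<in>cube_n n. inner_n n u t) - (INF t\<in>cube_n n. inner_n n u t)"

end

theory Submission
  imports Defs
begin

lemma width_cube_eq: "width_cube n u = (\<Sum>i<n. \<bar>u i\<bar>)"
proof -
  define t0 where "t0 = (\<lambda>i\<in>{..<n}. sgn (u i) / 2)"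
  have t0: "t0 \<in> cube_n n" "(\<lambda>i\<in>{..<n}. - t0 i) \<in> cube_n n"
    by (auto simp: t0_def cube_n_def sgn_if)
  have i0: "inner_n n u t0 = (\<Sum>i<n. \<bar>u i\<bar>) / 2"
    by (auto simp: inner_n_def t0_def sum_divide_distrib intro!: sum.cong simp: sgn_if)
  have i1: "inner_n n u (\<lambda>i\<in>{..<n}. - t0 i) = - (\<Sum>i<n. \<bar>u i\<bar>) / 2"
    by (auto simp: inner_n_def t0_def sum_divide_distrib sum_negf[symmetric] intro!: sum.cong simp: sgn_if)
  have bnd: "\<bar>inner_n n u t\<bar> \<le> (\<Sum>i<n. \<bar>u i\<bar>) / 2" if "t \<in> cube_n n" for t
  proof -
    have "\<bar>inner_n n u t\<bar> \<le> (\<Sum>i<n. \<bar>u i * t i\<bar>)" unfolding inner_n_def by (rule sum_abs)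
    also have "\<dots> \<le> (\<Sum>i<n. \<bar>u i\<bar> / 2)"
    proof (intro sum_mono)
      fix i assume "i \<in> {..<n}"
      with that have "\<bar>t i\<bar> \<le> 1/2" by (force simp: cube_n_def PiE_iff abs_le_iff)
      then show "\<bar>u i * t i\<bar> \<le> \<bar>u i\<bar> / 2"
      proof -
        have "\<bar>u i\<bar> * \<bar>t i\<bar> \<le> \<bar>u i\<bar> * (1/2)" using \<open>\<bar>t i\<bar> \<le> 1/2\<close> by (rule mult_left_mono) auto
        then show ?thesis by (simp add: abs_mult)
      qed
    qed
    finally show ?thesis by (simp add: sum_divide_distrib)
  qed
  have "(SUP t\<in>cube_n n. inner_n n u t) = (\<Sum>i<n. \<bar>u i\<bar>) / 2"
  proof (rule cSup_eq_maximum)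
    show "(\<Sum>i<n. \<bar>u i\<bar>) / 2 \<in> inner_n n u ` cube_n n"
      using t0(1) i0 by (metis image_eqI)
  next
    fix x assume "x \<in> inner_n n u ` cube_n n"
    then obtain t where "t \<in> cube_n n" "x = inner_n n u t" by blast
    then show "x \<le> (\<Sum>i<n. \<bar>u i\<bar>) / 2" using bnd[of t] by (simp add: abs_le_iff)
  qed
  moreover have "(INF t\<in>cube_n n. inner_n n u t) = - (\<Sum>i<n. \<bar>u i\<bar>) / 2"
  proof (rule cInf_eq_minimum)
    show "- (\<Sum>i<n. \<bar>u i\<bar>) / 2 \<in> inner_n n u ` cube_n n"
      using t0(2) i1 by (metis image_eqI)
  next
    fix x assume "x \<in> inner_n n u ` cube_n n"
    then obtain t where "t \<in> cube_n n" "x = inner_n n u t" by blast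
    then show "- (\<Sum>i<n. \<bar>u i\<bar>) / 2 \<le> x" using bnd[of t] by (simp add: abs_le_iff)
  qed
  ultimately show ?thesis unfolding width_cube_def by simp
qed

definition sc :: "nat \<Rightarrow> real \<Rightarrow> (nat \<Rightarrow> real) \<Rightarrow> (nat \<Rightarrow> real)" where
  "sc n c x = (\<lambda>i\<in>{..<n}. c * x i)"

lemma space_Rn: "space (Rn n) = {..<n} \<rightarrow>\<^sub>E UNIV"
  by (simp add: Rn_def space_PiM)

lemma sc_meas[measurable]: "sc n c \<in> measurable (Rn n) (Rn n)"
  unfolding sc_def Rn_def by measurable

lemma euclid_norm_meas[measurable]: "euclid_norm n \<in> borel_measurable (Rn n)"
  unfolding euclid_norm_def Rn_def by measurable

lemma sumabs_meas[measurable]: "(\<lambda>U. \<Sum>i<n. \<bar>U i\<bar>) \<in> borel_measurable (Rn n)"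
  unfolding Rn_def by measurable

lemma sf_dens_const: "sigma_finite_measure (density (lborel::real measure) (\<lambda>_. ennreal c))"
  by (subst sigma_finite_measure.sigma_finite_iff_density_finite'[OF sigma_finite_lborel]) auto

lemma distr_sc:
  assumes c: "c > 0"
  shows "distr (Rn n) (Rn n) (sc n c) = density (Rn n) (\<lambda>_. ennreal ((1/c)^n))"
proof -
  interpret L: product_sigma_finite "\<lambda>_::nat. lborel" by standard
  interpret D: product_sigma_finite "\<lambda>_::nat. density (lborel::real measure) (\<lambda>_. ennreal (1/c))"
    by (rule product_sigma_finite.intro) (rule sf_dens_const)
  have pre: "emeasure lborel ((*) c -` B) = ennreal (1/c) * emeasure lborel B" if "B \<in> sets borel" for B
  proof -
    have "emeasure lborel ((*) c -` B) = emeasure (distr lborel borel ((*) c)) B"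
      using that by (subst emeasure_distr) auto
    also have "\<dots> = emeasure (density (lborel::real measure) (\<lambda>_. ennreal (inverse \<bar>c\<bar>))) B"
      using c by (subst lborel_distr_mult) auto
    also have "\<dots> = ennreal (1/c) * emeasure lborel B"
      using c that by (subst emeasure_density_const) (auto simp: field_simps)
    finally show ?thesis .
  qed
  have pres: "(*) c -` B \<in> sets borel" if "B \<in> sets borel" for B :: "real set"
    using measurable_sets[of "(*) c" borel borel B] that by simp
  have e1: "distr (Rn n) (Rn n) (sc n c) = PiM {..<n} (\<lambda>_. density (lborel::real measure) (\<lambda>_. ennreal (1/c)))"
  proof (rule D.PiM_eqI)
    show "sets (distr (Rn n) (Rn n) (sc n c)) = sets (PiM {..<n} (\<lambda>_. density (lborel::real measure) (\<lambda>_. ennreal (1/c))))"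
      unfolding Rn_def by (simp cong: sets_PiM_cong)
  next
    fix A :: "nat \<Rightarrow> real set" assume A: "\<And>i. i \<in> {..<n} \<Longrightarrow> A i \<in> sets (density (lborel::real measure) (\<lambda>_. ennreal (1 / c)))"
    then have A': "\<And>i. i \<in> {..<n} \<Longrightarrow> A i \<in> sets borel" by simp
    have box: "(sc n c) -` PiE {..<n} A \<inter> space (Rn n) = PiE {..<n} (\<lambda>i. (*) c -` A i)"
      by (auto simp: sc_def space_Rn PiE_iff extensional_def)
    have "emeasure (distr (Rn n) (Rn n) (sc n c)) (PiE {..<n} A)
        = emeasure (Rn n) (PiE {..<n} (\<lambda>i. (*) c -` A i))"
    proof -
      have "PiE {..<n} A \<in> sets (Rn n)" using A' unfolding Rn_def by (intro sets_PiM_I_finite) auto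
      then show ?thesis by (subst emeasure_distr) (simp_all add: box)
    qed
    also have "\<dots> = (\<Prod>i<n. emeasure lborel ((*) c -` A i))"
      unfolding Rn_def using A' pres by (subst L.emeasure_PiM) auto
    also have "\<dots> = (\<Prod>i<n. emeasure (density (lborel::real measure) (\<lambda>_. ennreal (1/c))) (A i))"
      using A' by (intro prod.cong refl) (simp add: pre emeasure_density_const)
    finally show "emeasure (distr (Rn n) (Rn n) (sc n c)) (PiE {..<n} A)
        = (\<Prod>i<n. emeasure (density (lborel::real measure) (\<lambda>_. ennreal (1/c))) (A i))" .
  qed simp
  have e2: "density (Rn n) (\<lambda>_. ennreal ((1/c)^n)) = PiM {..<n} (\<lambda>_. density (lborel::real measure) (\<lambda>_. ennreal (1/c)))"
  proof (rule D.PiM_eqI)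
    show "sets (density (Rn n) (\<lambda>_. ennreal ((1/c)^n))) = sets (PiM {..<n} (\<lambda>_. density (lborel::real measure) (\<lambda>_. ennreal (1/c))))"
      unfolding Rn_def by (simp cong: sets_PiM_cong)
  next
    fix A :: "nat \<Rightarrow> real set" assume A: "\<And>i. i \<in> {..<n} \<Longrightarrow> A i \<in> sets (density (lborel::real measure) (\<lambda>_. ennreal (1 / c)))"
    then have A': "\<And>i. i \<in> {..<n} \<Longrightarrow> A i \<in> sets borel" by simp
    have "emeasure (density (Rn n) (\<lambda>_. ennreal ((1/c)^n))) (PiE {..<n} A)
        = ennreal ((1/c)^n) * emeasure (Rn n) (PiE {..<n} A)"
      using A' by (subst emeasure_density_const) (auto simp: Rn_def intro!: sets_PiM_I_finite)
    also have "\<dots> = ennreal ((1/c)^n) * (\<Prod>i<n. emeasure lborel (A i))"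
      unfolding Rn_def using A' by (subst L.emeasure_PiM) auto
    also have "\<dots> = (\<Prod>i<n. ennreal (1/c) * emeasure lborel (A i))"
      using c by (simp add: prod.distrib ennreal_power)
    also have "\<dots> = (\<Prod>i<n. emeasure (density (lborel::real measure) (\<lambda>_. ennreal (1/c))) (A i))"
      using A' by (intro prod.cong refl) (simp add: emeasure_density_const)
    finally show "emeasure (density (Rn n) (\<lambda>_. ennreal ((1/c)^n))) (PiE {..<n} A)
        = (\<Prod>i<n. emeasure (density (lborel::real measure) (\<lambda>_. ennreal (1/c))) (A i))" .
  qed simp
  show ?thesis using e1 e2 by simp
qed

lemma emeasure_sc:
  assumes c: "c > 0" and E: "E \<in> sets (Rn n)"
  shows "emeasure (Rn n) (sc n c -` E \<inter> space (Rn n)) = ennreal ((1/c)^n) * emeasure (Rn n) E"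
proof -
  have "emeasure (Rn n) (sc n c -` E \<inter> space (Rn n)) = emeasure (distr (Rn n) (Rn n) (sc n c)) E"
    using E by (subst emeasure_distr) auto
  also have "\<dots> = ennreal ((1/c)^n) * emeasure (Rn n) E"
    using c E by (simp add: distr_sc emeasure_density_const)
  finally show ?thesis .
qed

lemma G_density:
  "PiM {..<n} (\<lambda>_. std_normal_distribution) = density (Rn n) (\<lambda>x. ennreal (\<Prod>i<n. std_normal_density (x i)))"
proof -
  interpret L: product_sigma_finite "\<lambda>_::nat. lborel" by standard
  interpret S: product_prob_space "\<lambda>_::nat. std_normal_distribution"
    by (intro product_prob_spaceI prob_space_normal_density) simp
  show ?thesis
  proof (rule S.PiM_eqI[symmetric])
    show "sets (density (Rn n) (\<lambda>x. ennreal (\<Prod>i<n. std_normal_density (x i)))) = sets (PiM {..<n} (\<lambda>_. std_normal_distribution))"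
      unfolding Rn_def by (simp cong: sets_PiM_cong)
  next
    fix A :: "nat \<Rightarrow> real set" assume A: "\<And>i. i \<in> {..<n} \<Longrightarrow> A i \<in> sets std_normal_distribution"
    then have A': "\<And>i. i \<in> {..<n} \<Longrightarrow> A i \<in> sets borel" by simp
    have "emeasure (density (Rn n) (\<lambda>x. ennreal (\<Prod>i<n. std_normal_density (x i)))) (PiE {..<n} A)
      = (\<integral>\<^sup>+x. ennreal (\<Prod>i<n. std_normal_density (x i)) * indicator (PiE {..<n} A) x \<partial>Rn n)"
      using A' by (subst emeasure_density) (auto simp: Rn_def intro!: sets_PiM_I_finite)
    also have "\<dots> = (\<integral>\<^sup>+x. (\<Prod>i<n. ennreal (std_normal_density (x i)) * indicator (A i) (x i)) \<partial>Rn n)"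
    proof (intro nn_integral_cong)
      fix x assume "x \<in> space (Rn n)"
      then have "indicator (PiE {..<n} A) x = (\<Prod>i<n. indicator (A i) (x i) :: ennreal)"
        by (auto simp: space_Rn indicator_def PiE_iff)
      then show "ennreal (\<Prod>i<n. std_normal_density (x i)) * indicator (PiE {..<n} A) x
          = (\<Prod>i<n. ennreal (std_normal_density (x i)) * indicator (A i) (x i))"
        by (simp add: prod.distrib prod_ennreal)
    qed
    also have "\<dots> = (\<Prod>i<n. \<integral>\<^sup>+t. ennreal (std_normal_density t) * indicator (A i) t \<partial>lborel)"
      unfolding Rn_def using A' by (subst L.product_nn_integral_prod) auto
    also have "\<dots> = (\<Prod>i<n. emeasure std_normal_distribution (A i))"
      using A' by (intro prod.cong refl) (simp add: emeasure_density)
    finally show "emeasure (density (Rn n) (\<lambda>x. ennreal (\<Prod>i<n. std_normal_density (x i)))) (PiE {..<n} A)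
      = (\<Prod>i<n. emeasure std_normal_distribution (A i))" .
  qed simp
qed

definition Pn :: "nat \<Rightarrow> (nat \<Rightarrow> real) \<Rightarrow> (nat \<Rightarrow> real)" where
  "Pn n x = (\<lambda>i\<in>{..<n}. x i / euclid_norm n x)"

lemma Pn_meas[measurable]: "Pn n \<in> measurable (Rn n) (Rn n)"
  unfolding Pn_def Rn_def euclid_norm_def by measurable

lemma unit_ball_sets[measurable]: "unit_ball_n n \<in> sets (Rn n)"
  unfolding unit_ball_n_def by measurable

lemma euclid_norm_nonneg: "euclid_norm n x \<ge> 0"
  unfolding euclid_norm_def by (simp add: sum_nonneg)

lemma euclid_norm_sq: "(euclid_norm n x)^2 = (\<Sum>i<n. (x i)^2)"
  unfolding euclid_norm_def by (simp add: sum_nonneg)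

lemma euclid_norm_sc: "c > 0 \<Longrightarrow> euclid_norm n (sc n c x) = c * euclid_norm n x"
proof -
  assume c: "c > 0"
  have "(\<Sum>i<n. (sc n c x i)^2) = c^2 * (\<Sum>i<n. (x i)^2)"
    by (simp add: sc_def sum_distrib_left power_mult_distrib)
  then show ?thesis using c unfolding euclid_norm_def by (simp add: real_sqrt_mult)
qed

lemma Pn_sc: "c > 0 \<Longrightarrow> Pn n (sc n c x) = Pn n x"
  using euclid_norm_sc[of c n x] unfolding Pn_def sc_def by (auto simp: fun_eq_iff)

lemma sc_space: "x \<in> space (Rn n) \<Longrightarrow> sc n c x \<in> space (Rn n)"
  by (simp add: sc_def space_Rn)

definition is_cone :: "nat \<Rightarrow> (nat \<Rightarrow> real) set \<Rightarrow> bool" where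
  "is_cone n K \<longleftrightarrow> (\<forall>c>0. \<forall>x\<in>space (Rn n). sc n c x \<in> K \<longleftrightarrow> x \<in> K)"

lemma cone_Pn: "is_cone n (Pn n -` A \<inter> space (Rn n))"
  by (auto simp: is_cone_def Pn_sc sc_space)

lemma cone_ball:
  assumes K: "K \<in> sets (Rn n)" and cone: "is_cone n K" and r: "r > 0"
  shows "emeasure (Rn n) {x\<in>space (Rn n). x \<in> K \<and> euclid_norm n x \<le> r}
       = ennreal (r^n) * emeasure (Rn n) (K \<inter> unit_ball_n n)"
proof -
  have "{x\<in>space (Rn n). x \<in> K \<and> euclid_norm n x \<le> r} = sc n (1/r) -` (K \<inter> unit_ball_n n) \<inter> space (Rn n)"
  proof (intro equalityI subsetI)
    fix x assume "x \<in> {x\<in>space (Rn n). x \<in> K \<and> euclid_norm n x \<le> r}"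
    then have x: "x \<in> space (Rn n)" "x \<in> K" "euclid_norm n x \<le> r" by auto
    have "sc n (1/r) x \<in> K" using cone x r by (auto simp: is_cone_def)
    moreover have "sc n (1/r) x \<in> unit_ball_n n"
      using x r by (auto simp: unit_ball_n_def sc_space euclid_norm_sc)
    ultimately show "x \<in> sc n (1/r) -` (K \<inter> unit_ball_n n) \<inter> space (Rn n)" using x by auto
  next
    fix x assume "x \<in> sc n (1/r) -` (K \<inter> unit_ball_n n) \<inter> space (Rn n)"
    then have x: "x \<in> space (Rn n)" "sc n (1/r) x \<in> K" "sc n (1/r) x \<in> unit_ball_n n" by auto
    have "x \<in> K" using cone r x by (auto simp: is_cone_def)
    moreover have "euclid_norm n x \<le> r"
      using r x by (auto simp: unit_ball_n_def euclid_norm_sc field_simps)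
    ultimately show "x \<in> {x\<in>space (Rn n). x \<in> K \<and> euclid_norm n x \<le> r}" using x by auto
  qed
  moreover have "emeasure (Rn n) (sc n (1/r) -` (K \<inter> unit_ball_n n) \<inter> space (Rn n))
      = ennreal (r^n) * emeasure (Rn n) (K \<inter> unit_ball_n n)"
    using r K by (subst emeasure_sc) auto
  ultimately show ?thesis by simp
qed

lemma zero_set_null:
  assumes n: "n \<ge> 1"
  shows "emeasure (Rn n) {x\<in>space (Rn n). euclid_norm n x \<le> 0} = 0"
proof -
  interpret L: product_sigma_finite "\<lambda>_::nat. lborel" by standard
  have sub: "{x\<in>space (Rn n). euclid_norm n x \<le> 0} \<subseteq> PiE {..<n} (\<lambda>_. {0})"
  proof (intro subsetI)
    fix x assume "x \<in> {x\<in>space (Rn n). euclid_norm n x \<le> 0}"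
    then have x: "x \<in> space (Rn n)" "euclid_norm n x \<le> 0" by auto
    then have "euclid_norm n x = 0" using euclid_norm_nonneg[of n x] by simp
    then have "(\<Sum>i<n. (x i)^2) = 0" using euclid_norm_sq[of n x] by simp
    then have "\<forall>i\<in>{..<n}. (x i)^2 = 0" by (subst (asm) sum_nonneg_eq_0_iff) auto
    then show "x \<in> PiE {..<n} (\<lambda>_. {0})" using x by (auto simp: space_Rn PiE_iff extensional_def fun_eq_iff)
  qed
  have "emeasure (Rn n) (PiE {..<n} (\<lambda>_. {0})) = (\<Prod>i<n. emeasure lborel {0::real})"
    unfolding Rn_def by (subst L.emeasure_PiM) auto
  also have "\<dots> = 0" using n by simp
  finally have "emeasure (Rn n) (PiE {..<n} (\<lambda>_. {0})) = 0" .
  moreover have "PiE {..<n} (\<lambda>_. {0::real}) \<in> sets (Rn n)"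
    unfolding Rn_def by (intro sets_PiM_I_finite) auto
  ultimately show ?thesis using sub by (metis (no_types, lifting) emeasure_eq_0)
qed

definition c0 :: "nat \<Rightarrow> real" where "c0 n = (1 / sqrt (2 * pi)) ^ n"
definition hg :: "nat \<Rightarrow> (nat \<Rightarrow> real) \<Rightarrow> real" where
  "hg n x = c0 n * exp (- (euclid_norm n x)\<^sup>2 / 2)"
definition phi :: "nat \<Rightarrow> real \<Rightarrow> real" where
  "phi n t = (if t \<le> c0 n then sqrt (2 * ln (c0 n / t)) ^ n else 0)"
definition Cn :: "nat \<Rightarrow> ennreal" where
  "Cn n = (\<integral>\<^sup>+t. indicator {0<..} t * ennreal (phi n t) \<partial>lborel)"

lemma c0_pos: "c0 n > 0" by (simp add: c0_def)

lemma hg_meas[measurable]: "hg n \<in> borel_measurable (Rn n)"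
  unfolding hg_def by measurable

lemma hg_nonneg: "hg n x \<ge> 0" using c0_pos[of n] by (simp add: hg_def)

lemma prod_std: "(\<Prod>i<n. std_normal_density (x i)) = hg n x"
proof -
  have "(\<Prod>i<n. std_normal_density (x i)) = (\<Prod>i<n. (1 / sqrt (2 * pi)) * exp (- (x i)\<^sup>2 / 2))"
    by (simp add: std_normal_density_def)
  also have "\<dots> = c0 n * (\<Prod>i<n. exp (- (x i)\<^sup>2 / 2))"
    by (simp only: prod.distrib prod_constant c0_def card_lessThan)
  also have "(\<Prod>i<n. exp (- (x i)\<^sup>2 / 2)) = exp (\<Sum>i<n. - (x i)\<^sup>2 / 2)"
    by (simp add: exp_sum)
  also have "(\<Sum>i<n. - (x i)\<^sup>2 / 2) = - (euclid_norm n x)\<^sup>2 / 2"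
    by (simp add: euclid_norm_sq sum_negf sum_divide_distrib)
  finally show ?thesis by (simp add: hg_def)
qed

lemma sfR: "sigma_finite_measure (Rn n)"
proof -
  interpret L: product_sigma_finite "\<lambda>_::nat. lborel" by standard
  show ?thesis unfolding Rn_def by (rule L.sigma_finite) simp
qed

lemma layer_set:
  assumes n: "n \<ge> 1" and t: "t > 0" and K: "K \<in> sets (Rn n)" and cone: "is_cone n K"
  shows "emeasure (Rn n) {x\<in>space (Rn n). x \<in> K \<and> t \<le> hg n x} = ennreal (phi n t) * emeasure (Rn n) (K \<inter> unit_ball_n n)"
proof (cases "t \<le> c0 n")
  case False
  have hle: "hg n x \<le> c0 n" for x
    using c0_pos[of n] by (simp add: hg_def mult_le_cancel_left1)
  have "\<not> t \<le> hg n x" for x using hle[of x] False by linarith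
  then have E: "{x\<in>space (Rn n). x \<in> K \<and> t \<le> hg n x} = {}" by blast
  show ?thesis unfolding E using False by (simp add: phi_def)
next
  case True
  define \<rho> where "\<rho> = sqrt (2 * ln (c0 n / t))"
  have lnpos: "ln (c0 n / t) \<ge> 0" using True t by (intro ln_ge_zero) simp
  have \<rho>: "\<rho> \<ge> 0" using lnpos by (simp add: \<rho>_def)
  have iff: "t \<le> hg n x \<longleftrightarrow> euclid_norm n x \<le> \<rho>" for x
  proof -
    have "t \<le> hg n x \<longleftrightarrow> ln t \<le> ln (hg n x)"
      using t c0_pos[of n] by (simp add: hg_def)
    also have "ln (hg n x) = ln (c0 n) - (euclid_norm n x)\<^sup>2 / 2"
      using c0_pos[of n] by (simp add: hg_def ln_mult)
    also have "ln t \<le> ln (c0 n) - (euclid_norm n x)\<^sup>2 / 2 \<longleftrightarrow> (euclid_norm n x)\<^sup>2 \<le> \<rho>^2"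
      using lnpos t c0_pos[of n] by (simp add: \<rho>_def ln_div) linarith
    also have "\<dots> \<longleftrightarrow> euclid_norm n x \<le> \<rho>"
      using \<rho> euclid_norm_nonneg[of n x] by (simp add: power2_le_iff_abs_le)
    finally show ?thesis .
  qed
  have seteq: "{x\<in>space (Rn n). x \<in> K \<and> t \<le> hg n x} = {x\<in>space (Rn n). x \<in> K \<and> euclid_norm n x \<le> \<rho>}"
    by (simp add: iff)
  show ?thesis
  proof (cases "\<rho> > 0")
    case True
    with seteq show ?thesis using cone_ball[OF K cone True] \<open>t \<le> c0 n\<close>
      by (simp add: phi_def \<rho>_def)
  next
    case False
    then have r0: "\<rho> = 0" using \<rho> by simp
    have "emeasure (Rn n) {x\<in>space (Rn n). x \<in> K \<and> euclid_norm n x \<le> \<rho>} = 0"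
    proof (rule emeasure_eq_0)
      show "{x\<in>space (Rn n). euclid_norm n x \<le> 0} \<in> sets (Rn n)" by measurable
      show "emeasure (Rn n) {x\<in>space (Rn n). euclid_norm n x \<le> 0} = 0" by (rule zero_set_null[OF n])
      show "{x\<in>space (Rn n). x \<in> K \<and> euclid_norm n x \<le> \<rho>} \<subseteq> {x\<in>space (Rn n). euclid_norm n x \<le> 0}"
        using r0 by auto
    qed
    moreover have "phi n t = 0" using r0 n \<open>t \<le> c0 n\<close> by (simp add: phi_def \<rho>_def[symmetric])
    ultimately show ?thesis using seteq by simp
  qed
qed

lemma phi_meas[measurable]: "phi n \<in> borel_measurable borel"
  unfolding phi_def by measurable

lemma gauss_cone:
  assumes n: "n \<ge> 1" and K: "K \<in> sets (Rn n)" and cone: "is_cone n K"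
  shows "emeasure (PiM {..<n} (\<lambda>_. std_normal_distribution)) K = emeasure (Rn n) (K \<inter> unit_ball_n n) * Cn n"
proof -
  note K[measurable]
  interpret R: sigma_finite_measure "Rn n" by (rule sfR)
  interpret P: pair_sigma_finite "Rn n" "lborel :: real measure"
    by (simp add: pair_sigma_finite_def sfR sigma_finite_lborel)
  define f where "f = (\<lambda>(x, t::real). if x \<in> K \<and> 0 < t \<and> t \<le> hg n x then 1 else (0::ennreal))"
  have fm: "f \<in> borel_measurable (Rn n \<Otimes>\<^sub>M lborel)"
    unfolding f_def using K by measurable
  have "emeasure (PiM {..<n} (\<lambda>_. std_normal_distribution)) K = emeasure (density (Rn n) (\<lambda>x. ennreal (hg n x))) K"
    by (simp add: G_density prod_std)
  also have "\<dots> = (\<integral>\<^sup>+x. ennreal (hg n x) * indicator K x \<partial>Rn n)"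
    using K by (subst emeasure_density) auto
  also have "\<dots> = (\<integral>\<^sup>+x. (\<integral>\<^sup>+t. f (x, t) \<partial>lborel) \<partial>Rn n)"
  proof (intro nn_integral_cong)
    fix x
    have "(\<integral>\<^sup>+t. f (x, t) \<partial>lborel) = (\<integral>\<^sup>+t. indicator K x * indicator {0<..hg n x} t \<partial>lborel)"
      by (intro nn_integral_cong) (auto simp: f_def indicator_def)
    also have "\<dots> = indicator K x * emeasure lborel {0<..hg n x}"
      by (subst nn_integral_cmult) auto
    also have "\<dots> = ennreal (hg n x) * indicator K x"
      using hg_nonneg[of n x] by (simp add: mult.commute)
    finally show "ennreal (hg n x) * indicator K x = (\<integral>\<^sup>+t. f (x, t) \<partial>lborel)" by simp
  qed
  also have "\<dots> = (\<integral>\<^sup>+t. (\<integral>\<^sup>+x. f (x, t) \<partial>Rn n) \<partial>lborel)"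
    by (rule P.Fubini[OF fm, symmetric])
  also have "\<dots> = (\<integral>\<^sup>+t. emeasure (Rn n) (K \<inter> unit_ball_n n) * (indicator {0<..} t * ennreal (phi n t)) \<partial>lborel)"
  proof (intro nn_integral_cong)
    fix t :: real
    have "(\<integral>\<^sup>+x. f (x, t) \<partial>Rn n) = (\<integral>\<^sup>+x. indicator {x\<in>space (Rn n). x \<in> K \<and> 0 < t \<and> t \<le> hg n x} x \<partial>Rn n)"
      by (intro nn_integral_cong) (auto simp: f_def indicator_def)
    also have "\<dots> = emeasure (Rn n) {x\<in>space (Rn n). x \<in> K \<and> 0 < t \<and> t \<le> hg n x}"
      by (intro nn_integral_indicator) measurable
    also have "\<dots> = emeasure (Rn n) (K \<inter> unit_ball_n n) * (indicator {0<..} t * ennreal (phi n t))"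
    proof (cases "t > 0")
      case True
      then show ?thesis using layer_set[OF n True K cone] by (simp add: mult.commute)
    next
      case False
      then show ?thesis by simp
    qed
    finally show "(\<integral>\<^sup>+x. f (x, t) \<partial>Rn n) = emeasure (Rn n) (K \<inter> unit_ball_n n) * (indicator {0<..} t * ennreal (phi n t))" .
  qed
  also have "\<dots> = emeasure (Rn n) (K \<inter> unit_ball_n n) * Cn n"
    unfolding Cn_def by (subst nn_integral_cmult) auto
  finally show ?thesis .
qed

lemma vol_ball: "emeasure (Rn n) (unit_ball_n n) = ennreal (unit_ball_vol (real n))"
proof -
  have "unit_ball_n n = {f. sqrt (\<Sum>i\<in>{..<n}. (f i)\<^sup>2) \<le> 1} \<inter> space (Pi\<^sub>M {..<n} (\<lambda>_. lborel))"
    by (auto simp: unit_ball_n_def euclid_norm_def Rn_def)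
  then show ?thesis using emeasure_cball_aux[of "{..<n}" 1] by (simp add: Rn_def)
qed

lemma sphere_gauss:
  assumes n: "n \<ge> 1"
  shows "uniform_sphere n = distr (PiM {..<n} (\<lambda>_. std_normal_distribution)) (Rn n) (Pn n)"
proof -
  let ?G = "PiM {..<n} (\<lambda>_. std_normal_distribution)"
  define \<beta> where "\<beta> = unit_ball_vol (real n)"
  have \<beta>: "\<beta> > 0" by (simp add: \<beta>_def)
  have sG: "sets ?G = sets (Rn n)" unfolding Rn_def by (simp cong: sets_PiM_cong)
  have spG: "space ?G = space (Rn n)" using sG by (rule sets_eq_imp_space_eq)
  interpret G: prob_space ?G
    by (intro prob_space_PiM) (auto intro: prob_space_normal_density)
  have cone_sp: "is_cone n (space (Rn n))" by (auto simp: is_cone_def sc_space)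
  have "1 = emeasure ?G (space ?G)" by (simp add: G.emeasure_space_1)
  also have "\<dots> = emeasure (Rn n) (space (Rn n) \<inter> unit_ball_n n) * Cn n"
    unfolding spG by (rule gauss_cone[OF n _ cone_sp]) simp
  also have "space (Rn n) \<inter> unit_ball_n n = unit_ball_n n" by (auto simp: unit_ball_n_def)
  finally have tot: "ennreal \<beta> * Cn n = 1" by (simp add: vol_ball \<beta>_def)
  have CnE: "Cn n = ennreal (1/\<beta>)"
  proof -
    have "Cn n = (ennreal (1/\<beta>) * ennreal \<beta>) * Cn n"
      using \<beta> by (simp add: ennreal_mult''[symmetric])
    also have "\<dots> = ennreal (1/\<beta>)" using tot by (simp add: mult.assoc)
    finally show ?thesis .
  qed
  show ?thesis
  proof (rule measure_eqI)
    show "sets (uniform_sphere n) = sets (distr ?G (Rn n) (Pn n))"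
      by (simp add: uniform_sphere_def)
  next
    fix A assume "A \<in> sets (uniform_sphere n)"
    then have A: "A \<in> sets (Rn n)" by (simp add: uniform_sphere_def)
    define K where "K = Pn n -` A \<inter> space (Rn n)"
    have K: "K \<in> sets (Rn n)" unfolding K_def using A by measurable
    have Pm: "Pn n \<in> measurable ?G (Rn n)" using Pn_meas by (simp cong: measurable_cong_sets add: sG)
    have "emeasure (distr ?G (Rn n) (Pn n)) A = emeasure ?G K"
      using A Pm by (simp add: emeasure_distr spG K_def)
    also have "\<dots> = emeasure (Rn n) (K \<inter> unit_ball_n n) * ennreal (1/\<beta>)"
      unfolding K_def using gauss_cone[OF n _ cone_Pn] A CnE K_def K by simp
    also have "\<dots> = emeasure (Rn n) (unit_ball_n n \<inter> K) / emeasure (Rn n) (unit_ball_n n)"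
      using \<beta> by (simp add: vol_ball \<beta>_def[symmetric] divide_ennreal_def inverse_ennreal Int_commute inverse_eq_divide)
    also have "\<dots> = emeasure (uniform_sphere n) A"
    proof -
      have "(\<lambda>x. \<lambda>i\<in>{..<n}. x i / euclid_norm n x) = Pn n" by (simp add: Pn_def fun_eq_iff)
      moreover have "(\<lambda>x. \<lambda>i\<in>{..<n}. x i / euclid_norm n x) \<in> measurable (uniform_measure (Rn n) (unit_ball_n n)) (Rn n)"
        unfolding Pn_def[symmetric] by (simp add: Pn_def[symmetric])
      ultimately show ?thesis unfolding uniform_sphere_def using A K
        by (simp add: emeasure_distr K_def)
    qed
    finally show "emeasure (uniform_sphere n) A = emeasure (distr ?G (Rn n) (Pn n)) A" by simp
  qed
qed

lemma inv_sqrt_bounds: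
  fixes s :: real
  assumes s0: "s > 0" and s2: "s^2 \<ge> 1/2"
  shows "\<bar>1/s - 1\<bar> \<le> \<bar>s^2 - 1\<bar>" and "\<bar>1/s - 1 + (s^2 - 1)/2\<bar> \<le> (s^2 - 1)^2"
proof -
  have s7: "s \<ge> 7/10"
  proof (rule ccontr)
    assume "\<not> s \<ge> 7/10"
    then have "s < 7/10" by simp
    then have "s * s < (7/10) * (7/10)" using s0 by (intro mult_strict_mono) auto
    then show False using s2 by (simp add: power2_eq_square)
  qed
  have k: "s * (s + 1) \<ge> 1"
  proof -
    have "(7/10) * (17/10) \<le> s * (s + 1)" using s7 by (intro mult_mono) auto
    then show ?thesis by simp
  qed
  have e1: "1/s - 1 = (1 - s) / s" using s0 by (simp add: field_simps)
  have e2: "s^2 - 1 = (s - 1) * (s + 1)" by (simp add: algebra_simps power2_eq_square)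
  have "\<bar>1/s - 1\<bar> = \<bar>s - 1\<bar> / s" using s0 by (simp add: e1 abs_minus_commute)
  also have "\<dots> \<le> \<bar>s - 1\<bar> * (s + 1)"
  proof -
    have "\<bar>s - 1\<bar> * 1 \<le> \<bar>s - 1\<bar> * (s * (s + 1))" using k by (intro mult_left_mono) auto
    then show ?thesis using s0 by (simp add: divide_le_eq algebra_simps)
  qed
  also have "\<dots> = \<bar>s^2 - 1\<bar>" using s0 by (simp add: e2 abs_mult)
  finally show "\<bar>1/s - 1\<bar> \<le> \<bar>s^2 - 1\<bar>" .
  have e3: "1/s - 1 + (s^2 - 1)/2 = (s - 1)^2 * ((s + 2) / (2 * s))"
    using s0 by (simp add: field_simps power2_eq_square)
  have k2: "(s + 2) / (2 * s) \<le> (s + 1)^2"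
  proof -
    have "2 * (s * (s + 1)) * (s + 1) \<ge> 2 * 1 * (s + 1)" using k s0 by (intro mult_right_mono) auto
    then have "s + 2 \<le> (s + 1)^2 * (2 * s)" using s0 by (simp add: power2_eq_square algebra_simps)
    then show ?thesis using s0 by (simp add: divide_le_eq)
  qed
  have "\<bar>1/s - 1 + (s^2 - 1)/2\<bar> = (s - 1)^2 * ((s + 2) / (2 * s))"
    unfolding e3 using s0 by simp
  also have "\<dots> \<le> (s - 1)^2 * (s + 1)^2" using k2 by (intro mult_left_mono) auto
  also have "\<dots> = (s^2 - 1)^2" by (simp add: e2 power_mult_distrib)
  finally show "\<bar>1/s - 1 + (s^2 - 1)/2\<bar> \<le> (s^2 - 1)^2" .
qed

lemma remainder_bound:
  fixes r SA SC m :: real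
  assumes r: "r > 0" and hc: "\<bar>SC\<bar> \<le> r^2/2" and m: "0 \<le> m" "m \<le> 1"
  shows "\<bar>(SA + r^2 * m) / sqrt (SC + r^2) - m * r - (SA - (m/2) * SC) / r\<bar> \<le> 2 * (SA^2 + SC^2) / r^3"
proof -
  define d where "d = SC / r^2"
  define s where "s = sqrt (1 + d)"
  have q: "\<bar>d\<bar> \<le> 1/2" using hc r by (simp add: d_def abs_div divide_le_eq)
  then have q1: "1 + d \<ge> 1/2" unfolding abs_le_iff by linarith
  have q0: "1 + d > 0" using q1 by linarith
  have s0: "s > 0" using q0 by (simp add: s_def)
  have ss: "s^2 = 1 + d" using q0 by (simp add: s_def)
  have s2: "s^2 \<ge> 1/2" using q1 ss by linarith
  have SCe: "SC = r^2 * (s^2 - 1)" using r by (simp add: ss d_def)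
  have sq: "sqrt (SC + r^2) = r * s"
  proof -
    have "SC + r^2 = r^2 * (1 + d)" using r by (simp add: field_simps d_def)
    then show ?thesis using r q0 by (simp add: s_def real_sqrt_mult)
  qed
  have id: "(SA + r^2 * m) / sqrt (SC + r^2) - m * r - (SA - (m/2) * SC) / r
       = (SA / r) * (1/s - 1) + m * r * (1/s - 1 + (s^2 - 1)/2)"
  proof -
    have "(SA + r^2 * m) / sqrt (SC + r^2) - m * r - (SA - (m/2) * SC) / r
       = (SA + r^2 * m) / (r * s) - m * r - (SA - (m/2) * (r^2 * (s^2 - 1))) / r"
      by (simp only: sq SCe[symmetric])
    also have "\<dots> = (SA / r) * (1/s - 1) + m * r * (1/s - 1 + (s^2 - 1)/2)"
      using r s0 by (simp add: field_simps power2_eq_square) (simp add: algebra_simps)?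
    finally show ?thesis .
  qed
  have b1: "\<bar>(SA / r) * (1/s - 1)\<bar> \<le> \<bar>SA\<bar> / r * \<bar>s^2 - 1\<bar>"
    using inv_sqrt_bounds(1)[OF s0 s2] r by (simp add: abs_mult) (intro divide_right_mono mult_left_mono, auto)
  have b2: "\<bar>m * r * (1/s - 1 + (s^2 - 1)/2)\<bar> \<le> m * r * (s^2 - 1)^2"
    using inv_sqrt_bounds(2)[OF s0 s2] r m by (simp add: abs_mult) (intro mult_left_mono, auto)
  have e: "s^2 - 1 = SC / r^2" using ss by (simp add: d_def)
  have "\<bar>(SA + r^2 * m) / sqrt (SC + r^2) - m * r - (SA - (m/2) * SC) / r\<bar>
      \<le> \<bar>SA\<bar> / r * \<bar>s^2 - 1\<bar> + m * r * (s^2 - 1)^2"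
    unfolding id using b1 b2 by (rule order_trans[OF abs_triangle_ineq add_mono])
  also have "\<dots> = (\<bar>SA\<bar> * \<bar>SC\<bar> + m * SC^2) / r^3"
    unfolding e using r by (simp add: abs_div field_simps power2_eq_square power3_eq_cube)
  also have "\<dots> \<le> 2 * (SA^2 + SC^2) / r^3"
  proof -
    have "\<bar>SA\<bar> * \<bar>SC\<bar> \<le> SA^2 + SC^2"
    proof -
      have "0 \<le> (\<bar>SA\<bar> - \<bar>SC\<bar>)^2" by simp
      moreover have "(\<bar>SA\<bar> - \<bar>SC\<bar>)^2 = SA^2 + SC^2 - 2 * (\<bar>SA\<bar> * \<bar>SC\<bar>)"
        by (simp add: power2_diff)
      moreover have "0 \<le> \<bar>SA\<bar> * \<bar>SC\<bar>" by simp
      ultimately show ?thesis by linarith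
    qed
    moreover have "m * SC^2 \<le> SC^2" using m by (simp add: mult_left_le_one_le)
    ultimately have "\<bar>SA\<bar> * \<bar>SC\<bar> + m * SC^2 \<le> (SA^2 + SC^2) + SC^2" by (rule add_mono)
    also have "\<dots> \<le> 2 * (SA^2 + SC^2)" by simp
    finally have "\<bar>SA\<bar> * \<bar>SC\<bar> + m * SC^2 \<le> 2 * (SA^2 + SC^2)" .
    then show ?thesis using r by (intro divide_right_mono) auto
  qed
  finally show ?thesis .
qed

abbreviation Phi :: "real \<Rightarrow> real" where "Phi \<equiv> cdf std_normal_distribution"

lemma Phi_isCont: "isCont Phi x"
proof -
  interpret N: real_distribution std_normal_distribution by (rule real_dist_normal_dist)
  have "emeasure std_normal_distribution {x} = (\<integral>\<^sup>+t. ennreal (std_normal_density t) * indicator {x} t \<partial>lborel)"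
    by (subst emeasure_density) auto
  also have "\<dots> = (\<integral>\<^sup>+t. ennreal (std_normal_density x) * indicator {x} t \<partial>lborel)"
    by (intro nn_integral_cong) (auto simp: indicator_def)
  also have "\<dots> = 0" by (subst nn_integral_cmult_indicator) auto
  finally have "measure std_normal_distribution {x} = 0" by (simp add: measure_def)
  then show ?thesis by (simp add: N.isCont_cdf)
qed

lemma cdf_normal_sigma:
  assumes \<sigma>: "\<sigma> > 0"
  shows "cdf (density lborel (\<lambda>x. ennreal (normal_density 0 \<sigma> x))) y = Phi (y / \<sigma>)"
proof -
  interpret S: prob_space std_normal_distribution by (rule prob_space_normal_density) simp
  have d0: "distributed std_normal_distribution lborel (\<lambda>x. x) (\<lambda>x. ennreal (normal_density 0 1 x))"
    unfolding distributed_def by (auto simp: distr_id2)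
  have "distributed std_normal_distribution lborel (\<lambda>x. 0 + \<sigma> * x) (\<lambda>x. ennreal (normal_density (0 + \<sigma> * 0) (\<bar>\<sigma>\<bar> * 1) x))"
    using \<sigma> by (intro S.normal_density_affine d0) auto
  then have eq: "density lborel (\<lambda>x. ennreal (normal_density 0 \<sigma> x)) = distr std_normal_distribution lborel (\<lambda>x. \<sigma> * x)"
    using \<sigma> by (simp add: distributed_def)
  have "cdf (density lborel (\<lambda>x. ennreal (normal_density 0 \<sigma> x))) y = measure std_normal_distribution ((\<lambda>x. \<sigma> * x) -` {..y} \<inter> space std_normal_distribution)"
    unfolding eq cdf_def by (subst measure_distr) auto
  also have "(\<lambda>x. \<sigma> * x) -` {..y} \<inter> space std_normal_distribution = {..y/\<sigma>}"
    using \<sigma> by (auto simp: pos_le_divide_eq mult.commute)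
  finally show ?thesis by (simp add: cdf_def)
qed

lemma (in prob_space) slutsky_normal:
  fixes Y Z :: "nat \<Rightarrow> 'a \<Rightarrow> real" and \<sigma> :: real
  assumes \<sigma>: "\<sigma> > 0"
    and Ym[measurable]: "\<And>n. Y n \<in> borel_measurable M"
    and Zm[measurable]: "\<And>n. Z n \<in> borel_measurable M"
    and clt: "weak_conv_m (\<lambda>n. distr M borel (\<lambda>x. Z n x / \<sigma>)) std_normal_distribution"
    and small: "\<And>\<epsilon>. \<epsilon> > 0 \<Longrightarrow> (\<lambda>n. prob {x\<in>space M. \<epsilon> \<le> \<bar>Y n x - Z n x\<bar>}) \<longlonglongrightarrow> 0"
  shows "weak_conv_m (\<lambda>n. distr M borel (Y n)) (density lborel (\<lambda>x. ennreal (normal_density 0 \<sigma> x)))"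
  unfolding weak_conv_m_def weak_conv_def
proof (intro allI impI)
  fix y :: real
  define F where "F n = prob {x\<in>space M. Y n x \<le> y}" for n
  define Gc where "Gc n z = prob {x\<in>space M. Z n x / \<sigma> \<le> z}" for n z
  define p where "p n e = prob {x\<in>space M. e \<le> \<bar>Y n x - Z n x\<bar>}" for n e
  have cF: "cdf (distr M borel (Y n)) y = F n" for n
    unfolding cdf_def F_def by (subst measure_distr) (auto simp: vimage_def Int_def conj_commute)
  have Gc_lim: "(\<lambda>n. Gc n z) \<longlonglongrightarrow> Phi z" for z
  proof -
    have "(\<lambda>n. cdf (distr M borel (\<lambda>x. Z n x / \<sigma>)) z) \<longlonglongrightarrow> Phi z"
      using clt Phi_isCont unfolding weak_conv_m_def weak_conv_def by blast
    moreover have "cdf (distr M borel (\<lambda>x. Z n x / \<sigma>)) z = Gc n z" for n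
      unfolding cdf_def Gc_def by (subst measure_distr) (auto simp: vimage_def Int_def conj_commute)
    ultimately show ?thesis by simp
  qed
  have up: "F n \<le> Gc n ((y + e) / \<sigma>) + p n e" for n e
  proof -
    have "{x\<in>space M. Y n x \<le> y} \<subseteq> {x\<in>space M. Z n x / \<sigma> \<le> (y + e) / \<sigma>} \<union> {x\<in>space M. e \<le> \<bar>Y n x - Z n x\<bar>}"
      using \<sigma> by (auto simp: divide_right_mono)
    then have "F n \<le> prob ({x\<in>space M. Z n x / \<sigma> \<le> (y + e) / \<sigma>} \<union> {x\<in>space M. e \<le> \<bar>Y n x - Z n x\<bar>})"
      unfolding F_def by (intro finite_measure_mono) auto
    also have "\<dots> \<le> Gc n ((y + e) / \<sigma>) + p n e"
      unfolding Gc_def p_def by (intro measure_subadditive) auto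
    finally show ?thesis .
  qed
  have lo: "Gc n ((y - e) / \<sigma>) \<le> F n + p n e" for n e
  proof -
    have "{x\<in>space M. Z n x / \<sigma> \<le> (y - e) / \<sigma>} \<subseteq> {x\<in>space M. Y n x \<le> y} \<union> {x\<in>space M. e \<le> \<bar>Y n x - Z n x\<bar>}"
      using \<sigma> by (auto simp: divide_le_cancel)
    then have "Gc n ((y - e) / \<sigma>) \<le> prob ({x\<in>space M. Y n x \<le> y} \<union> {x\<in>space M. e \<le> \<bar>Y n x - Z n x\<bar>})"
      unfolding Gc_def by (intro finite_measure_mono) auto
    also have "\<dots> \<le> F n + p n e"
      unfolding F_def p_def by (intro measure_subadditive) auto
    finally show ?thesis .
  qed
  have "F \<longlonglongrightarrow> Phi (y / \<sigma>)"
  proof (rule LIMSEQ_I)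
    fix r :: real assume r: "r > 0"
    have r2: "r / 2 > 0" using r by simp
    obtain d where d0: "d > 0" and dd: "\<forall>z. z \<noteq> y / \<sigma> \<and> norm (z - y / \<sigma>) < d \<longrightarrow> norm (Phi z - Phi (y / \<sigma>)) < r / 2"
      using LIM_D[OF Phi_isCont[of "y / \<sigma>", unfolded isCont_def] r2] by blast
    have d: "d > 0" "\<And>z. z \<noteq> y / \<sigma> \<Longrightarrow> \<bar>z - y / \<sigma>\<bar> < d \<Longrightarrow> \<bar>Phi z - Phi (y / \<sigma>)\<bar> < r / 2"
      using d0 dd by auto
    define e where "e = d * \<sigma> / 2"
    have e: "e > 0" using d \<sigma> by (simp add: e_def)
    have ed: "e / \<sigma> < d" using d \<sigma> by (simp add: e_def)
    have c1: "\<bar>Phi ((y + e) / \<sigma>) - Phi (y / \<sigma>)\<bar> < r / 2"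
      using ed e \<sigma> by (intro d(2)) (simp_all add: add_divide_distrib)
    have c2: "\<bar>Phi ((y - e) / \<sigma>) - Phi (y / \<sigma>)\<bar> < r / 2"
      using ed e \<sigma> by (intro d(2)) (simp_all add: diff_divide_distrib)
    have r4: "r / 4 > 0" using r by simp
    obtain N1 where N1: "\<And>n. n \<ge> N1 \<Longrightarrow> norm (Gc n ((y + e) / \<sigma>) - Phi ((y + e) / \<sigma>)) < r / 4"
      using LIMSEQ_D[OF Gc_lim r4] by blast
    obtain N2 where N2: "\<And>n. n \<ge> N2 \<Longrightarrow> norm (Gc n ((y - e) / \<sigma>) - Phi ((y - e) / \<sigma>)) < r / 4"
      using LIMSEQ_D[OF Gc_lim r4] by blast
    obtain N3 where N3: "\<And>n. n \<ge> N3 \<Longrightarrow> norm (p n e - 0) < r / 4"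
      using LIMSEQ_D[OF small[OF e] r4] unfolding p_def by blast
    show "\<exists>no. \<forall>n\<ge>no. norm (F n - Phi (y / \<sigma>)) < r"
    proof (intro exI allI impI)
      fix n assume n: "n \<ge> max N1 (max N2 N3)"
      have a1: "\<bar>Gc n ((y + e) / \<sigma>) - Phi ((y + e) / \<sigma>)\<bar> < r / 4" using N1[of n] n by simp
      have a2: "\<bar>Gc n ((y - e) / \<sigma>) - Phi ((y - e) / \<sigma>)\<bar> < r / 4" using N2[of n] n by simp
      have a3: "\<bar>p n e\<bar> < r / 4" using N3[of n] n by simp
      have "F n < Phi (y / \<sigma>) + r" using up[of n e] a1 a3 c1 unfolding abs_less_iff by linarith
      moreover have "F n > Phi (y / \<sigma>) - r" using lo[of n e] a2 a3 c2 unfolding abs_less_iff by linarith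
      ultimately show "norm (F n - Phi (y / \<sigma>)) < r" unfolding real_norm_def abs_less_iff by linarith
    qed
  qed
  then show "(\<lambda>n. cdf (distr M borel (Y n)) y) \<longlonglongrightarrow> cdf (density lborel (\<lambda>x. ennreal (normal_density 0 \<sigma> x))) y"
    using cF cdf_normal_sigma[OF \<sigma>] by simp
qed

definition mm :: real where "mm = sqrt (2 / pi)"

lemma base_mom: "has_bochner_integral std_normal_distribution (\<lambda>x. \<bar>x\<bar>^k)
   (if k = 0 then 1 else if k = 1 then mm else if k = 2 then 1 else if k = 3 then 2 * mm else if k = 4 then 3 else 0)"
  if "k \<le> 4" for k :: nat
proof -
  have D: "has_bochner_integral std_normal_distribution f v"
    if "has_bochner_integral lborel (\<lambda>x. std_normal_density x * f x) v" "f \<in> borel_measurable borel" for f v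
    by (rule has_bochner_integral_density) (use that in auto)
  have "k = 0 \<or> k = 1 \<or> k = 2 \<or> k = 3 \<or> k = 4" using that by auto
  then show ?thesis
  proof (elim disjE)
    assume k: "k = 0"
    show ?thesis using std_normal_moment_even[of 0] k by (intro D) auto
  next
    assume k: "k = 1"
    show ?thesis using std_normal_moment_abs_odd[of 0] k by (intro D) (auto simp: mm_def)
  next
    assume k: "k = 2"
    have "has_bochner_integral lborel (\<lambda>x. std_normal_density x * \<bar>x\<bar>^2) 1"
      using std_normal_moment_even[of 1] by simp
    then show ?thesis using k by (intro D) auto
  next
    assume k: "k = 3"
    have "has_bochner_integral lborel (\<lambda>x. std_normal_density x * \<bar>x\<bar>^3) (2 * mm)"
      using std_normal_moment_abs_odd[of 1] by (simp add: mm_def mult.commute)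
    then show ?thesis using k by (intro D) auto
  next
    assume k: "k = 4"
    have e: "\<bar>x\<bar>^4 = x^(2*2)" for x :: real by (simp add: power_even_abs)
    have "has_bochner_integral lborel (\<lambda>x. std_normal_density x * \<bar>x\<bar>^4) 3"
      using std_normal_moment_even[of 2] by (simp add: e fact_numeral)
    then show ?thesis using k by (intro D) auto
  qed
qed

lemma poly_mom:
  "has_bochner_integral std_normal_distribution
     (\<lambda>x. ca + cb * \<bar>x\<bar> + cc * \<bar>x\<bar>^2 + cd * \<bar>x\<bar>^3 + ce * \<bar>x\<bar>^4)
     (ca + cb * mm + cc + cd * (2 * mm) + ce * 3)"
proof -
  have b0: "has_bochner_integral std_normal_distribution (\<lambda>x. ca * \<bar>x\<bar>^0) (ca * 1)"
    using base_mom[of 0] by (intro has_bochner_integral_mult_right) auto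
  have b1: "has_bochner_integral std_normal_distribution (\<lambda>x. cb * \<bar>x\<bar>^1) (cb * mm)"
    using base_mom[of 1] by (intro has_bochner_integral_mult_right) auto
  have b2: "has_bochner_integral std_normal_distribution (\<lambda>x. cc * \<bar>x\<bar>^2) (cc * 1)"
    using base_mom[of 2] by (intro has_bochner_integral_mult_right) auto
  have b3: "has_bochner_integral std_normal_distribution (\<lambda>x. cd * \<bar>x\<bar>^3) (cd * (2 * mm))"
    using base_mom[of 3] by (intro has_bochner_integral_mult_right) auto
  have b4: "has_bochner_integral std_normal_distribution (\<lambda>x. ce * \<bar>x\<bar>^4) (ce * 3)"
    using base_mom[of 4] by (intro has_bochner_integral_mult_right) auto
  have "has_bochner_integral std_normal_distribution
     (\<lambda>x. ca * \<bar>x\<bar>^0 + cb * \<bar>x\<bar>^1 + cc * \<bar>x\<bar>^2 + cd * \<bar>x\<bar>^3 + ce * \<bar>x\<bar>^4)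
     (ca * 1 + cb * mm + cc * 1 + cd * (2 * mm) + ce * 3)"
    by (intro has_bochner_integral_add b0 b1 b2 b3 b4)
  then show ?thesis by simp
qed

lemma mom_rule:
  assumes "\<And>x. f x = ca + cb * \<bar>x\<bar> + cc * \<bar>x\<bar>^2 + cd * \<bar>x\<bar>^3 + ce * \<bar>x\<bar>^4"
    and "v = ca + cb * mm + cc + cd * (2 * mm) + ce * 3"
  shows "has_bochner_integral std_normal_distribution f v"
proof -
  have e: "f = (\<lambda>x. ca + cb * \<bar>x\<bar> + cc * \<bar>x\<bar>^2 + cd * \<bar>x\<bar>^3 + ce * \<bar>x\<bar>^4)"
    by (intro ext) (rule assms(1))
  show ?thesis unfolding e assms(2) by (rule poly_mom)
qed

lemma mm_sq: "mm^2 = 2 / pi" by (simp add: mm_def)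
lemma mm_pos: "mm > 0" by (simp add: mm_def)
lemma mm_le1: "mm \<le> 1"
proof -
  have "2 / pi \<le> 1" using pi_gt3 by simp
  then show ?thesis by (simp add: mm_def)
qed

definition f1 :: "real \<Rightarrow> real" where "f1 x = \<bar>x\<bar> - mm"
definition f2 :: "real \<Rightarrow> real" where "f2 x = x^2 - 1"
definition xi :: "real \<Rightarrow> real" where "xi x = f1 x - (mm / 2) * f2 x"

lemma f1_meas[measurable]: "f1 \<in> borel_measurable borel" unfolding f1_def by measurable
lemma f2_meas[measurable]: "f2 \<in> borel_measurable borel" unfolding f2_def by measurable
lemma xi_meas[measurable]: "xi \<in> borel_measurable borel" unfolding xi_def by measurable

lemma x2abs: "(x::real)^2 = \<bar>x\<bar>^2" by simp
lemma x4abs: "(x::real)^4 = \<bar>x\<bar>^4" by (simp add: power_even_abs)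

lemma f1_mom: "has_bochner_integral std_normal_distribution f1 0"
  "has_bochner_integral std_normal_distribution (\<lambda>x. (f1 x)^2) (1 - mm^2)"
  by (rule mom_rule[where ca="-mm" and cb=1 and cc=0 and cd=0 and ce=0]; simp add: f1_def)
     (rule mom_rule[where ca="mm^2" and cb="-2*mm" and cc=1 and cd=0 and ce=0];
      simp add: f1_def power2_eq_square algebra_simps)

lemma f2_mom: "has_bochner_integral std_normal_distribution f2 0"
  "has_bochner_integral std_normal_distribution (\<lambda>x. (f2 x)^2) 2"
  by (rule mom_rule[where ca="-1" and cb=0 and cc=1 and cd=0 and ce=0]; simp add: f2_def)
     (rule mom_rule[where ca="1" and cb=0 and cc="-2" and cd=0 and ce=1];
      simp add: f2_def power2_eq_square algebra_simps power4_eq_xxxx)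

lemma xi_mom: "has_bochner_integral std_normal_distribution xi 0"
  "has_bochner_integral std_normal_distribution (\<lambda>x. (xi x)^2) ((pi - 3) / pi)"
proof -
  show "has_bochner_integral std_normal_distribution xi 0"
    by (rule mom_rule[where ca="-mm/2" and cb=1 and cc="-mm/2" and cd=0 and ce=0])
       (simp_all add: xi_def f1_def f2_def algebra_simps)
  show "has_bochner_integral std_normal_distribution (\<lambda>x. (xi x)^2) ((pi - 3) / pi)"
  proof (rule mom_rule[where ca="mm^2/4" and cb="-mm" and cc="1 + mm^2/2" and cd="-mm" and ce="mm^2/4"])
    fix x :: real
    have a: "x^2 = \<bar>x\<bar> * \<bar>x\<bar>" by (simp add: power2_eq_square abs_mult_self_eq)
    show "(xi x)^2 = mm^2/4 + (-mm) * \<bar>x\<bar> + (1 + mm^2/2) * \<bar>x\<bar>^2 + (-mm) * \<bar>x\<bar>^3 + mm^2/4 * \<bar>x\<bar>^4"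
      unfolding xi_def f1_def f2_def a by (simp add: power2_eq_square power3_eq_cube power4_eq_xxxx algebra_simps) (simp add: field_simps)
  next
    show "(pi - 3) / pi = mm^2/4 + (-mm) * mm + (1 + mm^2/2) + (-mm) * (2 * mm) + mm^2/4 * 3"
    proof -
      have k: "mm * (mm * pi) = 2" using mm_sq by (simp add: power2_eq_square mult.assoc[symmetric])
      show ?thesis using pi_gt3 k by (simp add: mm_sq[unfolded power2_eq_square] power2_eq_square field_simps)
    qed
  qed
qed

abbreviation Minf :: "(nat \<Rightarrow> real) measure" where
  "Minf \<equiv> PiM UNIV (\<lambda>_::nat. std_normal_distribution)"

interpretation MP: prob_space Minf
  by (intro prob_space_PiM prob_space_normal_density) simp

lemma coord_meas[measurable]: "(\<lambda>\<omega>. \<omega> i) \<in> borel_measurable Minf"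
proof -
  have "(\<lambda>\<omega>. \<omega> i) \<in> measurable Minf std_normal_distribution" by measurable
  then show ?thesis by (simp cong: measurable_cong_sets)
qed

lemma coord_distr: "distr Minf borel (\<lambda>\<omega>. \<omega> i) = std_normal_distribution"
proof -
  have "distr Minf std_normal_distribution (\<lambda>\<omega>. \<omega> i) = std_normal_distribution"
    by (rule distr_PiM_component) (auto intro: prob_space_normal_density)
  moreover have "distr Minf borel (\<lambda>\<omega>. \<omega> i) = distr Minf std_normal_distribution (\<lambda>\<omega>. \<omega> i)"
    by (rule distr_cong) auto
  ultimately show ?thesis by simp
qed

lemma coord_int:
  fixes g :: "real \<Rightarrow> real"
  assumes g[measurable]: "g \<in> borel_measurable borel"
  shows "integrable Minf (\<lambda>\<omega>. g (\<omega> i)) \<longleftrightarrow> integrable std_normal_distribution g"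
    and "(\<integral>\<omega>. g (\<omega> i) \<partial>Minf) = integral\<^sup>L std_normal_distribution g"
proof -
  show "integrable Minf (\<lambda>\<omega>. g (\<omega> i)) \<longleftrightarrow> integrable std_normal_distribution g"
    using integrable_distr_eq[of "\<lambda>\<omega>. \<omega> i" Minf borel g] coord_distr[of i] by simp
  show "(\<integral>\<omega>. g (\<omega> i) \<partial>Minf) = integral\<^sup>L std_normal_distribution g"
    using integral_distr[of "\<lambda>\<omega>. \<omega> i" Minf borel g] coord_distr[of i] by simp
qed

lemma coord_indep: "MP.indep_vars (\<lambda>_. borel) (\<lambda>i \<omega>. \<omega> i) UNIV"
proof -
  have "MP.indep_vars (\<lambda>_. borel) (\<lambda>i \<omega>. \<omega> i) UNIV \<longleftrightarrow>
     distr Minf (PiM UNIV (\<lambda>_. borel)) (\<lambda>x. \<lambda>i\<in>UNIV. x i) = PiM UNIV (\<lambda>i. distr Minf borel (\<lambda>\<omega>. \<omega> i))"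
    by (rule MP.indep_vars_iff_distr_eq_PiM') auto
  moreover have "distr Minf (PiM UNIV (\<lambda>_. borel)) (\<lambda>x. \<lambda>i\<in>UNIV. x i) = Minf"
    unfolding restrict_UNIV by (rule distr_id2) (simp cong: sets_PiM_cong)
  moreover have "PiM UNIV (\<lambda>i. distr Minf borel (\<lambda>\<omega>. \<omega> i)) = Minf" by (simp add: coord_distr)
  ultimately show ?thesis by simp
qed

lemma L2_sum:
  fixes f :: "real \<Rightarrow> real" and v :: real
  assumes f[measurable]: "f \<in> borel_measurable borel"
    and i1: "has_bochner_integral std_normal_distribution f 0"
    and i2: "has_bochner_integral std_normal_distribution (\<lambda>x. (f x)^2) v"
  shows "integrable Minf (\<lambda>\<omega>. (\<Sum>i<n. f (\<omega> i))^2)" and "(\<integral>\<omega>. (\<Sum>i<n. f (\<omega> i))^2 \<partial>Minf) = real n * v"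
proof -
  have intf: "integrable Minf (\<lambda>\<omega>. f (\<omega> i))" for i
    using i1 by (simp add: coord_int has_bochner_integral_iff)
  have exf: "(\<integral>\<omega>. f (\<omega> i) \<partial>Minf) = 0" for i
    using i1 by (simp add: coord_int has_bochner_integral_iff)
  have intf2: "integrable Minf (\<lambda>\<omega>. (f (\<omega> i))^2)" for i
    using i2 coord_int(1)[of "\<lambda>x. (f x)^2" i] by (simp add: has_bochner_integral_iff)
  have exf2: "(\<integral>\<omega>. (f (\<omega> i))^2 \<partial>Minf) = v" for i
    using i2 coord_int(2)[of "\<lambda>x. (f x)^2" i] by (simp add: has_bochner_integral_iff)
  have indep: "MP.indep_vars (\<lambda>_. borel) (\<lambda>k \<omega>. f (\<omega> k)) UNIV"
    using coord_indep by (rule MP.indep_vars_compose2) auto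
  have pr: "integrable Minf (\<lambda>\<omega>. f (\<omega> i) * f (\<omega> j)) \<and> (\<integral>\<omega>. f (\<omega> i) * f (\<omega> j) \<partial>Minf) = (if i = j then v else 0)" for i j
  proof (cases "i = j")
    case True
    then show ?thesis using intf2[of i] exf2[of i] by (simp add: power2_eq_square)
  next
    case False
    have ind2: "MP.indep_vars (\<lambda>_. borel) (\<lambda>k \<omega>. f (\<omega> k)) {i, j}"
      using indep by (rule MP.indep_vars_subset) auto
    have pe: "(\<Prod>k\<in>{i, j}. f (\<omega> k)) = f (\<omega> i) * f (\<omega> j)" for \<omega>
      using False by simp
    have "integrable Minf (\<lambda>\<omega>. \<Prod>k\<in>{i, j}. f (\<omega> k))"
      by (rule MP.indep_vars_integrable[OF _ ind2]) (auto intro: intf)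
    moreover have "(\<integral>\<omega>. (\<Prod>k\<in>{i, j}. f (\<omega> k)) \<partial>Minf) = (\<Prod>k\<in>{i, j}. \<integral>\<omega>. f (\<omega> k) \<partial>Minf)"
      by (rule MP.indep_vars_lebesgue_integral[OF _ ind2]) (auto intro: intf)
    ultimately show ?thesis using False by (simp add: pe exf)
  qed
  have pr1: "integrable Minf (\<lambda>\<omega>. f (\<omega> i) * f (\<omega> j))" for i j using pr by blast
  have pr2: "(\<integral>\<omega>. f (\<omega> i) * f (\<omega> j) \<partial>Minf) = (if i = j then v else 0)" for i j using pr by blast
  have sq: "(\<Sum>i<n. f (\<omega> i))^2 = (\<Sum>i<n. \<Sum>j<n. f (\<omega> i) * f (\<omega> j))" for \<omega>
    by (simp add: power2_eq_square sum_product)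
  show "integrable Minf (\<lambda>\<omega>. (\<Sum>i<n. f (\<omega> i))^2)"
    unfolding sq by (simp add: pr1)
  have "(\<integral>\<omega>. (\<Sum>i<n. f (\<omega> i))^2 \<partial>Minf) = (\<Sum>i<n. \<Sum>j<n. \<integral>\<omega>. f (\<omega> i) * f (\<omega> j) \<partial>Minf)"
    unfolding sq by (simp add: pr1 integral_sum)
  also have "\<dots> = (\<Sum>i<n. \<Sum>j<n. if i = j then v else 0)"
    by (simp only: pr2)
  also have "\<dots> = real n * v" by simp
  finally show "(\<integral>\<omega>. (\<Sum>i<n. f (\<omega> i))^2 \<partial>Minf) = real n * v" .
qed

definition sig :: real where "sig = sqrt ((pi - 3) / pi)"

lemma sig_pos: "sig > 0" using pi_gt3 by (simp add: sig_def)

lemma clt_xi: "weak_conv_m (\<lambda>n. distr Minf borel (\<lambda>\<omega>. (\<Sum>i<n. xi (\<omega> i)) / sqrt (n * sig^2))) std_normal_distribution"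
proof (rule MP.central_limit_theorem_zero_mean)
  show "MP.indep_vars (\<lambda>i. borel) (\<lambda>i \<omega>. xi (\<omega> i)) UNIV"
    using coord_indep by (rule MP.indep_vars_compose2) auto
  show "MP.expectation (\<lambda>\<omega>. xi (\<omega> n)) = 0" for n
    using xi_mom(1) by (simp add: coord_int has_bochner_integral_iff)
  show "sig > 0" by (rule sig_pos)
  show "integrable Minf (\<lambda>\<omega>. (xi (\<omega> n))^2)" for n
    using xi_mom(2) coord_int(1)[of "\<lambda>x. (xi x)^2" n] by (simp add: has_bochner_integral_iff)
  show "MP.variance (\<lambda>\<omega>. xi (\<omega> n)) = sig^2" for n
  proof -
    have "MP.expectation (\<lambda>\<omega>. xi (\<omega> n)) = 0"
      using xi_mom(1) by (simp add: coord_int has_bochner_integral_iff)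
    moreover have "(\<integral>\<omega>. (xi (\<omega> n))^2 \<partial>Minf) = (pi - 3) / pi"
      using xi_mom(2) coord_int(2)[of "\<lambda>x. (xi x)^2" n] by (simp add: has_bochner_integral_iff)
    ultimately show ?thesis using pi_gt3 by (simp add: sig_def)
  qed
  show "distr Minf borel (\<lambda>\<omega>. xi (\<omega> n)) = distr std_normal_distribution borel xi" for n
  proof -
    have "distr Minf borel (\<lambda>\<omega>. xi (\<omega> n)) = distr (distr Minf borel (\<lambda>\<omega>. \<omega> n)) borel xi"
      by (subst distr_distr) (auto simp: comp_def)
    then show ?thesis by (simp add: coord_distr)
  qed
qed

definition Yf :: "nat \<Rightarrow> (nat \<Rightarrow> real) \<Rightarrow> real" where
  "Yf n \<omega> = (\<Sum>i<n. \<bar>\<omega> i\<bar>) / sqrt (\<Sum>i<n. (\<omega> i)^2) - sqrt (2 * real n / pi)"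

lemma Yf_meas[measurable]: "Yf n \<in> borel_measurable Minf"
  unfolding Yf_def by measurable

lemma distr_identity:
  assumes n: "n \<ge> 1"
  shows "distr (uniform_sphere n) borel (\<lambda>U. width_cube n U - sqrt (2 * real n / pi)) = distr Minf borel (Yf n)"
proof -
  interpret SP: product_prob_space "\<lambda>_::nat. std_normal_distribution" UNIV
    by (intro product_prob_spaceI prob_space_normal_density) simp
  let ?G = "PiM {..<n} (\<lambda>_::nat. std_normal_distribution)"
  define W where "W U = (\<Sum>i<n. \<bar>U i\<bar>) - sqrt (2 * real n / pi)" for U :: "nat \<Rightarrow> real"
  have Wm[measurable]: "W \<in> borel_measurable (Rn n)" unfolding W_def by measurable
  have sG: "sets ?G = sets (Rn n)" unfolding Rn_def by (simp cong: sets_PiM_cong)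
  have Pm: "Pn n \<in> measurable ?G (Rn n)" using Pn_meas by (simp cong: measurable_cong_sets add: sG)
  have Rm: "(\<lambda>\<omega>. restrict \<omega> {..<n}) \<in> measurable Minf ?G" by measurable
  have "distr (uniform_sphere n) borel (\<lambda>U. width_cube n U - sqrt (2 * real n / pi)) = distr (uniform_sphere n) borel W"
    by (simp add: width_cube_eq W_def[abs_def])
  also have "\<dots> = distr (distr ?G (Rn n) (Pn n)) borel W" by (simp add: sphere_gauss[OF n])
  also have "\<dots> = distr ?G borel (\<lambda>x. W (Pn n x))"
    using Pm by (subst distr_distr) (auto simp: comp_def)
  also have "\<dots> = distr (distr Minf ?G (\<lambda>\<omega>. restrict \<omega> {..<n})) borel (\<lambda>x. W (Pn n x))"
    by (subst SP.distr_PiM_restrict_finite) auto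
  also have "\<dots> = distr Minf borel (\<lambda>\<omega>. W (Pn n (restrict \<omega> {..<n})))"
  proof (subst distr_distr)
    show "(\<lambda>x. W (Pn n x)) \<in> borel_measurable ?G" using Pm by measurable
  qed (auto simp: comp_def Rm)
  also have "\<dots> = distr Minf borel (Yf n)"
  proof (rule distr_cong)
    fix \<omega> :: "nat \<Rightarrow> real"
    have N: "euclid_norm n (restrict \<omega> {..<n}) = sqrt (\<Sum>i<n. (\<omega> i)^2)"
      by (simp add: euclid_norm_def)
    have "(\<Sum>i<n. \<bar>Pn n (restrict \<omega> {..<n}) i\<bar>) = (\<Sum>i<n. \<bar>\<omega> i\<bar> / sqrt (\<Sum>i<n. (\<omega> i)^2))"
      by (intro sum.cong) (auto simp: Pn_def N abs_div sum_nonneg)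
    also have "\<dots> = (\<Sum>i<n. \<bar>\<omega> i\<bar>) / sqrt (\<Sum>i<n. (\<omega> i)^2)" by (simp add: sum_divide_distrib)
    finally show "W (Pn n (restrict \<omega> {..<n})) = Yf n \<omega>" by (simp add: W_def Yf_def)
  qed auto
  finally show ?thesis .
qed

definition Zf :: "nat \<Rightarrow> (nat \<Rightarrow> real) \<Rightarrow> real" where
  "Zf n \<omega> = (\<Sum>i<n. xi (\<omega> i)) / sqrt (real n)"

lemma Zf_meas[measurable]: "Zf n \<in> borel_measurable Minf"
  unfolding Zf_def by measurable

lemma inv_sqrt_lim: "(\<lambda>n. 1 / sqrt (real n)) \<longlonglongrightarrow> 0"
proof -
  have "(\<lambda>n. sqrt (1 / real n)) \<longlonglongrightarrow> sqrt 0"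
    by (intro tendsto_real_sqrt lim_const_over_n)
  then show ?thesis by (simp add: real_sqrt_divide)
qed

lemma small_rem:
  assumes e: "\<epsilon> > 0"
  shows "(\<lambda>n. MP.prob {\<omega>\<in>space Minf. \<epsilon> \<le> \<bar>Yf n \<omega> - Zf n \<omega>\<bar>}) \<longlonglongrightarrow> 0"
proof -
  define SA where "SA n (\<omega>::nat \<Rightarrow> real) = (\<Sum>i<n. f1 (\<omega> i))" for n :: nat and \<omega>
  define SC where "SC n (\<omega>::nat \<Rightarrow> real) = (\<Sum>i<n. f2 (\<omega> i))" for n :: nat and \<omega>
  have SAm[measurable]: "SA n \<in> borel_measurable Minf" for n unfolding SA_def by measurable
  have SCm[measurable]: "SC n \<in> borel_measurable Minf" for n unfolding SC_def by measurable
  define K where "K = 2 * (3 - mm^2) / \<epsilon>"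
  define bnd where "bnd n = 8 / real n + K * (1 / sqrt (real n))" for n
  have key: "MP.prob {\<omega>\<in>space Minf. \<epsilon> \<le> \<bar>Yf n \<omega> - Zf n \<omega>\<bar>} \<le> bnd n" if n: "n \<ge> 1" for n
  proof -
    define r where "r = sqrt (real n)"
    have r: "r > 0" using n by (simp add: r_def)
    have r2: "r^2 = real n" by (simp add: r_def)
    have r3: "r^3 = real n * r" by (simp add: r_def power3_eq_cube)
    have iS: "(\<Sum>i<n. \<bar>\<omega> i\<bar>) = SA n \<omega> + r^2 * mm" for \<omega>
      by (simp add: SA_def f1_def sum_subtractf r2)
    have iR: "(\<Sum>i<n. (\<omega> i)^2) = SC n \<omega> + r^2" for \<omega>
      by (simp add: SC_def f2_def sum_subtractf r2)
    have iC: "sqrt (2 * real n / pi) = mm * r"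
      by (simp add: mm_def r_def real_sqrt_mult[symmetric])
    have iX: "(\<Sum>i<n. xi (\<omega> i)) = SA n \<omega> - (mm/2) * SC n \<omega>" for \<omega>
      by (simp add: SA_def SC_def xi_def sum_subtractf sum_distrib_left)
    have YZ: "Yf n \<omega> - Zf n \<omega> = (SA n \<omega> + r^2 * mm) / sqrt (SC n \<omega> + r^2) - mm * r - (SA n \<omega> - (mm/2) * SC n \<omega>) / r" for \<omega>
      unfolding Yf_def Zf_def iS iR iC iX r_def[symmetric] by simp
    define A1 where "A1 = {\<omega>\<in>space Minf. (real n)^2 / 4 \<le> (SC n \<omega>)^2}"
    define A2 where "A2 = {\<omega>\<in>space Minf. \<epsilon> * r^3 / 2 \<le> (SA n \<omega>)^2 + (SC n \<omega>)^2}"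
    have sub: "{\<omega>\<in>space Minf. \<epsilon> \<le> \<bar>Yf n \<omega> - Zf n \<omega>\<bar>} \<subseteq> A1 \<union> A2"
    proof (intro subsetI)
      fix \<omega> assume "\<omega> \<in> {\<omega>\<in>space Minf. \<epsilon> \<le> \<bar>Yf n \<omega> - Zf n \<omega>\<bar>}"
      then have w: "\<omega> \<in> space Minf" "\<epsilon> \<le> \<bar>Yf n \<omega> - Zf n \<omega>\<bar>" by auto
      show "\<omega> \<in> A1 \<union> A2"
      proof (cases "(real n)^2 / 4 \<le> (SC n \<omega>)^2")
        case True then show ?thesis using w by (simp add: A1_def)
      next
        case False
        then have "(SC n \<omega>)^2 \<le> (real n / 2)^2" by (simp add: power_divide)
        then have "\<bar>SC n \<omega>\<bar> \<le> \<bar>real n / 2\<bar>" by (subst abs_le_square_iff) 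
        then have hc: "\<bar>SC n \<omega>\<bar> \<le> r^2 / 2" by (simp add: r2)
        have "\<epsilon> \<le> 2 * ((SA n \<omega>)^2 + (SC n \<omega>)^2) / r^3"
          using w(2) remainder_bound[OF r hc mm_pos[THEN less_imp_le] mm_le1, of "SA n \<omega>"]
          unfolding YZ by linarith
        then have "\<epsilon> * r^3 / 2 \<le> (SA n \<omega>)^2 + (SC n \<omega>)^2"
          using r by (simp add: le_divide_eq field_simps)
        then show ?thesis using w by (simp add: A2_def)
      qed
    qed
    have intSC: "integrable Minf (\<lambda>\<omega>. (SC n \<omega>)^2)" and eSC: "(\<integral>\<omega>. (SC n \<omega>)^2 \<partial>Minf) = real n * 2"
      unfolding SC_def using L2_sum[OF f2_meas f2_mom(1) f2_mom(2)] by auto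
    have intSA: "integrable Minf (\<lambda>\<omega>. (SA n \<omega>)^2)" and eSA: "(\<integral>\<omega>. (SA n \<omega>)^2 \<partial>Minf) = real n * (1 - mm^2)"
      unfolding SA_def using L2_sum[OF f1_meas f1_mom(1) f1_mom(2)] by auto
    have p1: "MP.prob A1 \<le> 8 / real n"
    proof -
      have "MP.prob A1 \<le> (\<integral>\<omega>. (SC n \<omega>)^2 \<partial>Minf) / ((real n)^2 / 4)"
        unfolding A1_def using n by (intro integral_Markov_inequality_measure[OF intSC, of "space Minf"]) auto
      also have "\<dots> = 8 / real n" unfolding eSC using n by (simp add: power2_eq_square field_simps)
      finally show ?thesis .
    qed
    have p2: "MP.prob A2 \<le> K * (1 / r)"
    proof -
      have "MP.prob A2 \<le> (\<integral>\<omega>. (SA n \<omega>)^2 + (SC n \<omega>)^2 \<partial>Minf) / (\<epsilon> * r^3 / 2)"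
        unfolding A2_def using r e intSA intSC
        by (intro integral_Markov_inequality_measure[of Minf _ "space Minf"]) auto
      also have "\<dots> = (real n * (1 - mm^2) + real n * 2) / (\<epsilon> * (real n * r) / 2)"
        by (subst Bochner_Integration.integral_add[OF intSA intSC]) (simp only: eSA eSC r3)
      also have "\<dots> = K * (1 / r)" using n r e by (simp add: K_def field_simps)
      finally show ?thesis .
    qed
    have "MP.prob {\<omega>\<in>space Minf. \<epsilon> \<le> \<bar>Yf n \<omega> - Zf n \<omega>\<bar>} \<le> MP.prob (A1 \<union> A2)"
      using sub by (intro MP.finite_measure_mono) (auto simp: A1_def A2_def)
    also have "\<dots> \<le> MP.prob A1 + MP.prob A2"
      by (intro measure_subadditive) (auto simp: A1_def A2_def)
    also have "\<dots> \<le> bnd n" using p1 p2 by (simp add: bnd_def r_def)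
    finally show ?thesis .
  qed
  have bl: "bnd \<longlonglongrightarrow> 0"
  proof -
    have "(\<lambda>n. 8 / real n + K * (1 / sqrt (real n))) \<longlonglongrightarrow> 0 + K * 0"
      by (intro tendsto_add tendsto_mult tendsto_const lim_const_over_n inv_sqrt_lim)
    then show ?thesis by (simp add: bnd_def[abs_def])
  qed
  show ?thesis
  proof (rule tendsto_sandwich[OF _ _ tendsto_const bl])
    show "\<forall>\<^sub>F n in sequentially. 0 \<le> MP.prob {\<omega>\<in>space Minf. \<epsilon> \<le> \<bar>Yf n \<omega> - Zf n \<omega>\<bar>}" by simp
    show "\<forall>\<^sub>F n in sequentially. MP.prob {\<omega>\<in>space Minf. \<epsilon> \<le> \<bar>Yf n \<omega> - Zf n \<omega>\<bar>} \<le> bnd n"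
      using key by (intro eventually_sequentiallyI[of 1]) auto
  qed
qed

theorem theorem3p2:
  shows "weak_conv_m
           (\<lambda>n. distr (uniform_sphere n) borel (\<lambda>U. width_cube n U - sqrt (2 * real n / pi)))
           (density lborel (normal_density 0 (sqrt ((pi - 3) / pi))))"
proof -
  have sl: "weak_conv_m (\<lambda>n. distr Minf borel (Yf n)) (density lborel (\<lambda>x. ennreal (normal_density 0 sig x)))"
  proof (rule MP.slutsky_normal[OF sig_pos])
    show "Yf n \<in> borel_measurable Minf" for n by measurable
    show "Zf n \<in> borel_measurable Minf" for n by measurable
    show "\<And>\<epsilon>. \<epsilon> > 0 \<Longrightarrow> (\<lambda>n. MP.prob {x\<in>space Minf. \<epsilon> \<le> \<bar>Yf n x - Zf n x\<bar>}) \<longlonglongrightarrow> 0"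
      by (rule small_rem)
    have "(\<lambda>x. Zf n x / sig) = (\<lambda>x. (\<Sum>i<n. xi (x i)) / sqrt (real n * sig^2))" for n
      using sig_pos by (simp add: Zf_def real_sqrt_mult fun_eq_iff)
    then show "weak_conv_m (\<lambda>n. distr Minf borel (\<lambda>x. Zf n x / sig)) std_normal_distribution"
      using clt_xi by simp
  qed
  show ?thesis
    unfolding weak_conv_m_def weak_conv_def
  proof (intro allI impI)
    fix x
    assume "isCont (cdf (density lborel (normal_density 0 (sqrt ((pi - 3) / pi))))) x"
    then have "(\<lambda>n. cdf (distr Minf borel (Yf n)) x) \<longlonglongrightarrow> cdf (density lborel (normal_density 0 (sqrt ((pi - 3) / pi)))) x"
      using sl unfolding weak_conv_m_def weak_conv_def sig_def by blast
    then show "(\<lambda>n. cdf (distr (uniform_sphere n) borel (\<lambda>U. width_cube n U - sqrt (2 * real n / pi))) x)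
        \<longlonglongrightarrow> cdf (density lborel (normal_density 0 (sqrt ((pi - 3) / pi)))) x"
      by (rule Lim_transform_eventually) (intro eventually_sequentiallyI[of 1], simp add: distr_identity)
  qed
qed

end
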